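(* Let $\Phi=(G,\varphi)$ be a complex unit gain graph and let $v$ be a vertex lying on a cycle of $G$. (i) If $r(\Phi)=r(G)-2\theta(G)$, then $r(\Phi)=r(\Phi-v)$, $r(G-v)=r(G)-2$ and $\theta(G)=\theta(G-v)+1$. (ii) If $r(\Phi)=r(G)+2\theta(G)$, then $r(\Phi)=r(\Phi-v)+2$, $r(G-v)=r(G)$ and $\theta(G)=\theta(G-v)+1$. (iii) If $r(\Phi)=r(G)-2\theta(G)$ (respectively $r(\Phi)=r(G)+2\theta(G)$), then $r(\Phi-v)=r(G-v)-2\theta(G-v)$ (respectively $r(\Phi-v)=r(G-v)+2\theta(G-v)$), $v$ lies on exactly one cycle of $G$, and $v$ is not a quasi-pendant vertex of $G$.
   Context: A complex unit gain graph $\Phi=(G,\varphi)$ consists of a finite simple graph $G$ with vertex set $\{v_1,\dots,v_n\}$ and a gain function $\varphi$ assigning to each oriented edge $e_{ij}$ ($v_iv_j\in E(G)$) a complex number of modulus $1$ with $\varphi(e_{ji})=\overline{\varphi(e_{ij})}$. $A(\Phi)$ is the Hermitian matrix with $(i,j)$ entry $\varphi(e_{ij})$ if $v_iv_j\in E(G)$ and $0$ otherwise; $r(\Phi)$ is its rank; $r(\cdot)$ of a simple graph is the rank of its $0$-$1$ adjacency matrix. $\Phi-v$ is the induced gain subgraph obtained by deleting $v$ and its incident edges (with underlying graph $G-v$). $\theta(G)=|E(G)|-|V(G)|+\omega(G)$, $\omega(G)$ the number of components. A quasi-pendant vertex is a vertex adjacent to a vertex of degree $1$. *)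

theory Defs
  imports "HOL-Library.Disjoint_Sets" "Jordan_Normal_Form.DL_Rank"
begin

definition simple_graph :: "'a set \<Rightarrow> ('a \<Rightarrow> 'a \<Rightarrow> bool) \<Rightarrow> bool" where
  "simple_graph V E \<longleftrightarrow> finite V \<and> (\<forall>x y. E x y \<longrightarrow> x \<in> V \<and> y \<in> V)
     \<and> (\<forall>x y. E x y \<longrightarrow> E y x) \<and> (\<forall>x. \<not> E x x)"

definition cu_gain_graph :: "'a set \<Rightarrow> ('a \<Rightarrow> 'a \<Rightarrow> bool) \<Rightarrow> ('a \<Rightarrow> 'a \<Rightarrow> complex) \<Rightarrow> bool" where
  "cu_gain_graph V E \<phi> \<longleftrightarrow> simple_graph V E \<and>
     (\<forall>x y. E x y \<longrightarrow> cmod (\<phi> x y) = 1 \<and> \<phi> y x = cnj (\<phi> x y))"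

definition gain_adj_mat :: "'a::linorder set \<Rightarrow> ('a \<Rightarrow> 'a \<Rightarrow> bool) \<Rightarrow> ('a \<Rightarrow> 'a \<Rightarrow> complex) \<Rightarrow> complex mat" where
  "gain_adj_mat V E \<phi> = (let vs = sorted_list_of_set V in
     mat (card V) (card V) (\<lambda>(i,j). if E (vs!i) (vs!j) then \<phi> (vs!i) (vs!j) else 0))"

definition adj_mat :: "'a::linorder set \<Rightarrow> ('a \<Rightarrow> 'a \<Rightarrow> bool) \<Rightarrow> real mat" where
  "adj_mat V E = (let vs = sorted_list_of_set V in
     mat (card V) (card V) (\<lambda>(i,j). if E (vs!i) (vs!j) then 1 else 0))"

definition gain_rank :: "'a::linorder set \<Rightarrow> ('a \<Rightarrow> 'a \<Rightarrow> bool) \<Rightarrow> ('a \<Rightarrow> 'a \<Rightarrow> complex) \<Rightarrow> nat" where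
  "gain_rank V E \<phi> = (vec_space.rank (card V) :: complex mat \<Rightarrow> nat) (gain_adj_mat V E \<phi>)"

definition graph_rank :: "'a::linorder set \<Rightarrow> ('a \<Rightarrow> 'a \<Rightarrow> bool) \<Rightarrow> nat" where
  "graph_rank V E = (vec_space.rank (card V) :: real mat \<Rightarrow> nat) (adj_mat V E)"

definition del_vert_set :: "'a set \<Rightarrow> 'a \<Rightarrow> 'a set" where
  "del_vert_set V v = V - {v}"

definition del_vert_rel :: "('a \<Rightarrow> 'a \<Rightarrow> bool) \<Rightarrow> 'a \<Rightarrow> ('a \<Rightarrow> 'a \<Rightarrow> bool)" where
  "del_vert_rel E v = (\<lambda>x y. E x y \<and> x \<noteq> v \<and> y \<noteq> v)"

definition num_edges :: "('a \<Rightarrow> 'a \<Rightarrow> bool) \<Rightarrow> nat" where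
  "num_edges E = card {{x, y} | x y. E x y}"

definition num_components :: "'a set \<Rightarrow> ('a \<Rightarrow> 'a \<Rightarrow> bool) \<Rightarrow> nat" where
  "num_components V E = card (V // {(x, y). x \<in> V \<and> y \<in> V \<and> E\<^sup>*\<^sup>* x y})"

definition theta :: "'a set \<Rightarrow> ('a \<Rightarrow> 'a \<Rightarrow> bool) \<Rightarrow> int" where
  "theta V E = int (num_edges E) - int (card V) + int (num_components V E)"

definition is_cycle :: "'a set \<Rightarrow> ('a \<Rightarrow> 'a \<Rightarrow> bool) \<Rightarrow> 'a list \<Rightarrow> bool" where
  "is_cycle V E cs \<longleftrightarrow> length cs \<ge> 3 \<and> distinct cs \<and> set cs \<subseteq> V \<and>
     (\<forall>i < length cs. E (cs ! i) (cs ! ((i + 1) mod length cs)))"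

text \<open>The edge set of a cycle; cycles (as subgraphs) are identified by their edge sets.\<close>
definition cycle_edges :: "'a list \<Rightarrow> 'a set set" where
  "cycle_edges cs = {{cs ! i, cs ! ((i + 1) mod length cs)} | i. i < length cs}"

definition on_cycle :: "'a set \<Rightarrow> ('a \<Rightarrow> 'a \<Rightarrow> bool) \<Rightarrow> 'a \<Rightarrow> bool" where
  "on_cycle V E v \<longleftrightarrow> (\<exists>cs. is_cycle V E cs \<and> v \<in> set cs)"

definition on_exactly_one_cycle :: "'a set \<Rightarrow> ('a \<Rightarrow> 'a \<Rightarrow> bool) \<Rightarrow> 'a \<Rightarrow> bool" where
  "on_exactly_one_cycle V E v \<longleftrightarrow>
     card {cycle_edges cs | cs. is_cycle V E cs \<and> v \<in> set cs} = 1"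

definition degree :: "('a \<Rightarrow> 'a \<Rightarrow> bool) \<Rightarrow> 'a \<Rightarrow> nat" where
  "degree E u = card {w. E u w}"

definition quasi_pendant :: "('a \<Rightarrow> 'a \<Rightarrow> bool) \<Rightarrow> 'a \<Rightarrow> bool" where
  "quasi_pendant E v \<longleftrightarrow> (\<exists>u. E v u \<and> degree E u = 1)"

end

theory Submission
  imports Defs
begin

definition indep :: "('r \<Rightarrow> 'c \<Rightarrow> 'b::field) \<Rightarrow> 'r set \<Rightarrow> 'c set \<Rightarrow> bool" where
  "indep f R J \<longleftrightarrow> (\<forall>c. (\<forall>i\<in>R. (\<Sum>j\<in>J. c j * f i j) = 0) \<longrightarrow> (\<forall>j\<in>J. c j = 0))"

definition rk :: "('r \<Rightarrow> 'c \<Rightarrow> 'b::field) \<Rightarrow> 'r set \<Rightarrow> 'c set \<Rightarrow> nat" where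
  "rk f R C = Max (card ` {J. J \<subseteq> C \<and> indep f R J})"

lemma indep_empty: "indep f R {}" unfolding indep_def by auto

lemma rk_fin: "finite C \<Longrightarrow> finite (card ` {J. J \<subseteq> C \<and> indep f R J})"
  by (rule finite_imageI) (rule finite_subset[of _ "Pow C"], auto)

lemma rk_ge: "finite C \<Longrightarrow> J \<subseteq> C \<Longrightarrow> indep f R J \<Longrightarrow> card J \<le> rk f R C"
  unfolding rk_def by (rule Max_ge[OF rk_fin]) auto

lemma rk_obtain:
  assumes "finite C"
  obtains J where "J \<subseteq> C" "indep f R J" "card J = rk f R C"
proof -
  have "rk f R C \<in> card ` {J. J \<subseteq> C \<and> indep f R J}"
    unfolding rk_def by (rule Max_in[OF rk_fin[OF assms]]) (use indep_empty in auto)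
  then show ?thesis using that by auto
qed

lemma indep_subset:
  assumes "indep f R J" "K \<subseteq> J" "finite J"
  shows "indep f R K"
  unfolding indep_def
proof (intro allI impI)
  fix c assume h: "\<forall>i\<in>R. (\<Sum>j\<in>K. c j * f i j) = 0"
  define d where "d = (\<lambda>j. if j \<in> K then c j else 0)"
  have "\<forall>i\<in>R. (\<Sum>j\<in>J. d j * f i j) = 0"
  proof
    fix i assume "i \<in> R"
    have "(\<Sum>j\<in>J. d j * f i j) = (\<Sum>j\<in>K. d j * f i j)"
      by (rule sum.mono_neutral_right) (use assms in \<open>auto simp: d_def\<close>)
    also have "\<dots> = (\<Sum>j\<in>K. c j * f i j)" by (simp add: d_def)
    finally show "(\<Sum>j\<in>J. d j * f i j) = 0" using h \<open>i\<in>R\<close> by simp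
  qed
  then have "\<forall>j\<in>J. d j = 0" using assms(1) unfolding indep_def by blast
  then show "\<forall>j\<in>K. c j = 0" using assms(2) unfolding d_def by (metis subsetD)
qed

lemma indep_mono_rows: "indep f R J \<Longrightarrow> R \<subseteq> R' \<Longrightarrow> indep f R' J"
  unfolding indep_def by blast

lemma rk_mono:
  assumes "R \<subseteq> R'" "C \<subseteq> C'" "finite C'"
  shows "rk f R C \<le> rk f R' C'"
proof -
  have fC: "finite C" using assms finite_subset by blast
  obtain J where "J \<subseteq> C" "indep f R J" "card J = rk f R C" using rk_obtain[OF fC] by blast
  then show ?thesis using rk_ge[OF assms(3), of J f R'] indep_mono_rows assms by fastforce
qed

lemma rk_cong:
  assumes "\<And>i j. i \<in> R \<Longrightarrow> j \<in> C \<Longrightarrow> f i j = g i j"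
  shows "rk f R C = rk g R C"
proof -
  have "\<And>J. J \<subseteq> C \<Longrightarrow> indep f R J = indep g R J"
  proof -
    fix J assume "J \<subseteq> C"
    then have "\<And>c i. i \<in> R \<Longrightarrow> (\<Sum>j\<in>J. c j * f i j) = (\<Sum>j\<in>J. c j * g i j)"
      using assms by (intro sum.cong) auto
    then show "indep f R J = indep g R J" unfolding indep_def by auto
  qed
  then have "{J. J \<subseteq> C \<and> indep f R J} = {J. J \<subseteq> C \<and> indep g R J}" by blast
  then show ?thesis unfolding rk_def by simp
qed

lemma rk_del_col:
  assumes "finite C"
  shows "rk f R C \<le> rk f R (C - {p}) + 1"
proof -
  obtain J where J: "J \<subseteq> C" "indep f R J" "card J = rk f R C" using rk_obtain[OF assms] by blast
  have fJ: "finite J" using J assms finite_subset by blast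
  have "indep f R (J - {p})" by (rule indep_subset[OF J(2) _ fJ]) auto
  then have "card (J - {p}) \<le> rk f R (C - {p})" using rk_ge[of "C - {p}" "J - {p}"] J assms by auto
  moreover have "card J \<le> card (J - {p}) + 1"
  proof (cases "p \<in> J")
    case True
    then show ?thesis using card.remove[OF fJ True] by simp
  next
    case False
    then show ?thesis by simp
  qed
  ultimately show ?thesis using J by linarith
qed

lemma rk_zero_col:
  fixes f :: "'r \<Rightarrow> 'c \<Rightarrow> 'b::field"
  assumes "finite C" "\<And>i. i \<in> R \<Longrightarrow> f i p = 0"
  shows "rk f R C = rk f R (C - {p})"
proof (rule antisym)
  show "rk f R (C - {p}) \<le> rk f R C" by (rule rk_mono) (use assms in auto)
  obtain J where J: "J \<subseteq> C" "indep f R J" "card J = rk f R C" using rk_obtain[OF assms(1)] by blast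
  have fJ: "finite J" using J assms finite_subset by blast
  have "p \<notin> J"
  proof
    assume pJ: "p \<in> J"
    define c where "c = (\<lambda>j. if j = p then (1::'b) else 0)"
    have "\<forall>i\<in>R. (\<Sum>j\<in>J. c j * f i j) = 0"
    proof
      fix i assume "i \<in> R"
      have "(\<Sum>j\<in>J. c j * f i j) = (\<Sum>j\<in>J. if j = p then f i p else 0)"
        by (rule sum.cong) (auto simp: c_def)
      also have "\<dots> = f i p" using pJ fJ by simp
      finally have "(\<Sum>j\<in>J. c j * f i j) = f i p" .
      then show "(\<Sum>j\<in>J. c j * f i j) = 0" using assms(2)[OF \<open>i\<in>R\<close>] by simp
    qed
    then have "c p = 0" using J(2) pJ unfolding indep_def by blast
    then show False by (simp add: c_def)
  qed
  then show "rk f R C \<le> rk f R (C - {p})" using rk_ge[of "C - {p}" J f R] J assms by auto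
qed

lemma rk_zero_row:
  assumes "\<And>j. j \<in> C \<Longrightarrow> f p j = 0"
  shows "rk f R C = rk f (R - {p}) C"
proof -
  have "\<And>J. J \<subseteq> C \<Longrightarrow> indep f R J = indep f (R - {p}) J"
  proof -
    fix J assume J: "J \<subseteq> C"
    have "\<And>c. (\<Sum>j\<in>J. c j * f p j) = 0" using J assms by (intro sum.neutral) auto
    then show "indep f R J = indep f (R - {p}) J" unfolding indep_def by (metis Diff_iff singletonD)
  qed
  then have "{J. J \<subseteq> C \<and> indep f R J} = {J. J \<subseteq> C \<and> indep f (R - {p}) J}" by blast
  then show ?thesis unfolding rk_def by simp
qed

lemma rk_del_row:
  fixes f :: "'r \<Rightarrow> 'c \<Rightarrow> 'b::field"
  assumes "finite C"
  shows "rk f R C \<le> rk f (R - {p}) C + 1"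
proof -
  obtain J where J: "J \<subseteq> C" "indep f R J" "card J = rk f R C" using rk_obtain[OF assms] by blast
  have fJ: "finite J" using J assms finite_subset by blast
  show ?thesis
  proof (cases "indep f (R - {p}) J")
    case True
    then show ?thesis using rk_ge[OF assms J(1) True] J by simp
  next
    case False
    then obtain c j0 where c: "\<forall>i\<in>R - {p}. (\<Sum>j\<in>J. c j * f i j) = 0" "j0 \<in> J" "c j0 \<noteq> 0"
      unfolding indep_def by blast
    define \<beta> where "\<beta> = (\<Sum>j\<in>J. c j * f p j)"
    have pR: "p \<in> R" and b0: "\<beta> \<noteq> 0"
    proof -
      have "\<not> (\<forall>i\<in>R. (\<Sum>j\<in>J. c j * f i j) = 0)" using J(2) c unfolding indep_def by blast
      then obtain i where "i \<in> R" "(\<Sum>j\<in>J. c j * f i j) \<noteq> 0" by blast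
      then show "p \<in> R" "\<beta> \<noteq> 0" using c(1) unfolding \<beta>_def by auto
    qed
    have "indep f (R - {p}) (J - {j0})"
      unfolding indep_def
    proof (intro allI impI)
      fix d assume hd: "\<forall>i\<in>R - {p}. (\<Sum>j\<in>J - {j0}. d j * f i j) = 0"
      define d' where "d' = (\<lambda>j. if j = j0 then 0 else d j)"
      have sd: "\<And>i. (\<Sum>j\<in>J. d' j * f i j) = (\<Sum>j\<in>J - {j0}. d j * f i j)"
      proof -
        fix i
        have "(\<Sum>j\<in>J. d' j * f i j) = d' j0 * f i j0 + (\<Sum>j\<in>J - {j0}. d' j * f i j)"
          using fJ c(2) by (simp add: sum.remove)
        also have "\<dots> = (\<Sum>j\<in>J - {j0}. d j * f i j)" by (simp add: d'_def)
        finally show "(\<Sum>j\<in>J. d' j * f i j) = (\<Sum>j\<in>J - {j0}. d j * f i j)" .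
      qed
      define \<alpha> where "\<alpha> = (\<Sum>j\<in>J. d' j * f p j)"
      define e where "e = (\<lambda>j. d' j - (\<alpha> / \<beta>) * c j)"
      have se: "\<And>i. (\<Sum>j\<in>J. e j * f i j) = (\<Sum>j\<in>J. d' j * f i j) - (\<alpha> / \<beta>) * (\<Sum>j\<in>J. c j * f i j)"
        unfolding e_def by (simp add: algebra_simps sum_subtractf sum_distrib_left)
      have "\<forall>i\<in>R. (\<Sum>j\<in>J. e j * f i j) = 0"
      proof
        fix i assume "i \<in> R"
        show "(\<Sum>j\<in>J. e j * f i j) = 0"
        proof (cases "i = p")
          case True
          then show ?thesis using se[of p] b0 unfolding \<alpha>_def \<beta>_def by simp
        next
          case False
          then show ?thesis using se[of i] sd[of i] hd c(1) \<open>i \<in> R\<close> by simp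
        qed
      qed
      then have e0: "\<forall>j\<in>J. e j = 0" using J(2) unfolding indep_def by blast
      then have "e j0 = 0" using c(2) by blast
      then have "\<alpha> = 0" using c(3) b0 by (simp add: e_def d'_def)
      show "\<forall>j\<in>J - {j0}. d j = 0"
      proof
        fix j assume j: "j \<in> J - {j0}"
        then have "e j = 0" using e0 by blast
        then show "d j = 0" using j \<open>\<alpha> = 0\<close> by (simp add: e_def d'_def)
      qed
    qed
    then have "card (J - {j0}) \<le> rk f (R - {p}) C" using rk_ge[OF assms, of "J - {j0}"] J by auto
    moreover have "card J = card (J - {j0}) + 1" using card.remove[OF fJ c(2)] by simp
    ultimately show ?thesis using J by linarith
  qed
qed

lemma rk_pendant_ge:
  fixes f :: "'r \<Rightarrow> 'r \<Rightarrow> 'b::field"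
  assumes "finite C" "u \<noteq> w" "u \<in> R" "w \<in> R" "u \<in> C" "w \<in> C"
    and "\<And>j. j \<in> C \<Longrightarrow> j \<noteq> w \<Longrightarrow> f u j = 0"
    and "\<And>i. i \<in> R \<Longrightarrow> i \<noteq> w \<Longrightarrow> f i u = 0"
    and "f u w \<noteq> 0" "f w u \<noteq> 0"
  shows "rk f (R - {u} - {w}) (C - {u} - {w}) + 2 \<le> rk f R C"
proof -
  have fC: "finite (C - {u} - {w})" using assms by simp
  obtain J where J: "J \<subseteq> C - {u} - {w}" "indep f (R - {u} - {w}) J"
    "card J = rk f (R - {u} - {w}) (C - {u} - {w})" using rk_obtain[OF fC] by blast
  have fJ: "finite J" using J fC finite_subset by blast
  let ?K = "insert u (insert w J)"
  have "indep f R ?K"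
    unfolding indep_def
  proof (intro allI impI)
    fix c assume h: "\<forall>i\<in>R. (\<Sum>j\<in>?K. c j * f i j) = 0"
    have uJ: "u \<notin> J" "w \<notin> J" using J(1) by auto
    have split: "\<And>i. (\<Sum>j\<in>?K. c j * f i j) = c u * f i u + c w * f i w + (\<Sum>j\<in>J. c j * f i j)"
      using uJ fJ assms(2) by (simp add: algebra_simps)
    have zu: "(\<Sum>j\<in>J. c j * f u j) = 0" using J(1) assms(7) by (intro sum.neutral) auto
    have "c u * f u u + c w * f u w + 0 = 0" using h[rule_format, OF assms(3)] split[of u] zu by simp
    then have cw: "c w = 0" using assms(7)[OF assms(5) assms(2)] assms(9) by simp
    have rest: "\<forall>i\<in>R - {u} - {w}. (\<Sum>j\<in>J. c j * f i j) = 0"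
    proof
      fix i assume i: "i \<in> R - {u} - {w}"
      have "c u * f i u + c w * f i w + (\<Sum>j\<in>J. c j * f i j) = 0" using h i split[of i] by simp
      then show "(\<Sum>j\<in>J. c j * f i j) = 0" using assms(8)[of i] i cw by simp
    qed
    then have cJ: "\<forall>j\<in>J. c j = 0" using J(2) unfolding indep_def by blast
    have "(\<Sum>j\<in>J. c j * f w j) = 0" using cJ by simp
    then have "c u * f w u = 0" using h[rule_format, OF assms(4)] split[of w] cw by simp
    then have "c u = 0" using assms(10) by simp
    then show "\<forall>j\<in>?K. c j = 0" using cw cJ by auto
  qed
  moreover have "?K \<subseteq> C" using J(1) assms by auto
  ultimately have "card ?K \<le> rk f R C" using rk_ge[OF assms(1)] by blast
  moreover have "card ?K = card J + 2"
  proof -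
    have "u \<notin> insert w J" "w \<notin> J" using J(1) assms(2) by auto
    then show ?thesis using fJ by simp
  qed
  ultimately show ?thesis using J by linarith
qed

lemma img_sorted: "finite J \<Longrightarrow> (\<lambda>l. sorted_list_of_set J ! l) ` {..<card J} = J"
proof -
  assume fJ: "finite J"
  have "set (sorted_list_of_set J) = (\<lambda>l. sorted_list_of_set J ! l) ` {..<length (sorted_list_of_set J)}"
    by (auto simp: set_conv_nth)
  then show ?thesis using fJ by simp
qed

definition colsub :: "nat \<Rightarrow> 'b mat \<Rightarrow> nat set \<Rightarrow> 'b mat" where
  "colsub n A J = mat n (card J) (\<lambda>(i,l). A $$ (i, sorted_list_of_set J ! l))"

lemma colsub_facts:
  assumes A: "A \<in> carrier_mat n nc" and J: "J \<subseteq> {..<nc}"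
  shows "colsub n A J \<in> carrier_mat n (card J)"
    and "\<And>l. l < card J \<Longrightarrow> col (colsub n A J) l = col A (sorted_list_of_set J ! l)"
    and "set (cols (colsub n A J)) = col A ` J"
proof -
  have fJ: "finite J" using J finite_subset by blast
  let ?js = "sorted_list_of_set J"
  show "colsub n A J \<in> carrier_mat n (card J)" unfolding colsub_def by simp
  show cl: "\<And>l. l < card J \<Longrightarrow> col (colsub n A J) l = col A (?js ! l)"
  proof -
    fix l assume l: "l < card J"
    have "?js ! l \<in> J" using l fJ by (metis length_sorted_list_of_set nth_mem set_sorted_list_of_set)
    then have "?js ! l < nc" using J by auto
    then show "col (colsub n A J) l = col A (?js ! l)"
      using A l unfolding colsub_def by (intro eq_vecI) auto
  qed
  have "set (cols (colsub n A J)) = (\<lambda>l. col (colsub n A J) l) ` {..<card J}"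
    unfolding colsub_def by (auto simp: in_set_conv_nth cols_def)
  also have "\<dots> = (\<lambda>l. col A (?js ! l)) ` {..<card J}" using cl by auto
  also have "\<dots> = col A ` ((\<lambda>l. ?js ! l) ` {..<card J})" by auto
  also have "(\<lambda>l. ?js ! l) ` {..<card J} = J"
    using fJ by (rule img_sorted)
  finally show "set (cols (colsub n A J)) = col A ` J" .
qed

lemma colsub_mult:
  fixes A :: "'b::field mat"
  assumes A: "A \<in> carrier_mat n nc" and J: "J \<subseteq> {..<nc}" and i: "i < n"
    and v: "v \<in> carrier_vec (card J)"
  shows "(colsub n A J *\<^sub>v v) $ i =
     (\<Sum>j\<in>J. v $ (the_inv_into {..<card J} (\<lambda>l. sorted_list_of_set J ! l) j) * A $$ (i, j))"
proof -
  have fJ: "finite J" using J finite_subset by blast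
  let ?js = "sorted_list_of_set J"
  let ?h = "\<lambda>l. ?js ! l"
  have inj: "inj_on ?h {..<card J}"
    using fJ by (metis distinct_sorted_list_of_set inj_on_nth length_sorted_list_of_set lessThan_iff)
  have img: "?h ` {..<card J} = J"
    using fJ by (rule img_sorted)
  have "(colsub n A J *\<^sub>v v) $ i = (\<Sum>l<card J. A $$ (i, ?js ! l) * v $ l)"
    using i v unfolding colsub_def by (simp add: scalar_prod_def row_def atLeast0LessThan)
  also have "\<dots> = (\<Sum>l<card J. v $ (the_inv_into {..<card J} ?h (?h l)) * A $$ (i, ?h l))"
    by (rule sum.cong) (auto simp: the_inv_into_f_f[OF inj] mult.commute)
  also have "\<dots> = (\<Sum>j\<in>J. v $ (the_inv_into {..<card J} ?h j) * A $$ (i, j))"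
    using sum.reindex[OF inj, of "\<lambda>j. v $ (the_inv_into {..<card J} ?h j) * A $$ (i, j)"] img by simp
  finally show ?thesis .
qed

context vec_space
begin

lemma rk_le_rank:
  assumes A: "A \<in> carrier_mat n nc" and J: "J \<subseteq> {..<nc}"
    and ind: "indep (\<lambda>i j. A $$ (i, j)) {..<n} J"
  shows "card J \<le> rank A"
proof -
  have fJ: "finite J" using J finite_subset by blast
  let ?B = "colsub n A J"
  let ?js = "sorted_list_of_set J"
  let ?h = "\<lambda>l. ?js ! l"
  have inj: "inj_on ?h {..<card J}"
    using fJ by (metis distinct_sorted_list_of_set inj_on_nth length_sorted_list_of_set lessThan_iff)
  have img: "?h ` {..<card J} = J"
    using fJ by (rule img_sorted)
  note cf = colsub_facts[OF A J]
  have injc: "inj_on (col A) J"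
  proof
    fix a b assume ab: "a \<in> J" "b \<in> J" "col A a = col A b"
    show "a = b"
    proof (rule ccontr)
      assume ne: "a \<noteq> b"
      define c where "c = (\<lambda>j. if j = a then (1::'a) else if j = b then -1 else 0)"
      have "\<forall>i\<in>{..<n}. (\<Sum>j\<in>J. c j * A $$ (i, j)) = 0"
      proof
        fix i assume i: "i \<in> {..<n}"
        have eq: "A $$ (i, a) = A $$ (i, b)"
          using ab i A J by (metis (no_types, lifting) carrier_matD col_def index_vec lessThan_iff subsetD)
        have "(\<Sum>j\<in>J. c j * A $$ (i, j)) = (\<Sum>j\<in>J. (if j = a then A $$ (i,a) else 0) + (if j = b then - A $$ (i,b) else 0))"
          by (rule sum.cong) (auto simp: c_def ne)
        also have "\<dots> = A $$ (i,a) - A $$ (i,b)" using ab fJ by (simp add: sum.distrib)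
        finally show "(\<Sum>j\<in>J. c j * A $$ (i, j)) = 0" using eq by simp
      qed
      then have "c a = 0" using ind ab unfolding indep_def by blast
      then show False by (simp add: c_def)
    qed
  qed
  have dist: "distinct (cols ?B)"
  proof -
    have "cols ?B = map (\<lambda>l. col A (?js ! l)) [0..<card J]"
      using cf(1,2) by (intro nth_equalityI) auto
    also have "\<dots> = map (col A) ?js" by (intro nth_equalityI) (auto simp: fJ)
    finally show ?thesis using injc fJ by (simp add: distinct_map)
  qed
  have li: "lin_indpt (set (cols ?B))"
  proof
    assume "lin_dep (set (cols ?B))"
    then obtain v where v: "v \<in> carrier_vec (card J)" "v \<noteq> 0\<^sub>v (card J)" "?B *\<^sub>v v = 0\<^sub>v n"
      using lin_depE[OF cf(1) _ dist] by blast
    define c where "c = (\<lambda>j. v $ (the_inv_into {..<card J} ?h j))"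
    have "\<forall>i\<in>{..<n}. (\<Sum>j\<in>J. c j * A $$ (i, j)) = 0"
      using colsub_mult[OF A J _ v(1)] v(3) unfolding c_def by (metis index_zero_vec(1) lessThan_iff)
    then have c0: "\<forall>j\<in>J. c j = 0" using ind unfolding indep_def by blast
    have "v = 0\<^sub>v (card J)"
    proof (rule eq_vecI)
      fix l assume "l < dim_vec (0\<^sub>v (card J) :: 'a vec)"
      then have l: "l < card J" by simp
      have "?h l \<in> J" using img l by blast
      then have "c (?h l) = 0" using c0 by blast
      then show "v $ l = 0\<^sub>v (card J) $ l" using l unfolding c_def by (simp add: the_inv_into_f_f[OF inj])
    qed (use v in auto)
    then show False using v by simp
  qed
  have sub: "set (cols ?B) \<subseteq> set (cols A)"
    using cf(3) J A by (auto simp: cols_def)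
  have "card (set (cols ?B)) = card J" using cf(3) injc by (simp add: card_image)
  then show ?thesis using rank_ge_card_indpt[OF A sub li] by simp
qed

lemma rank_le_rk:
  assumes A: "A \<in> carrier_mat n nc"
  shows "rank A \<le> rk (\<lambda>i j. A $$ (i, j)) {..<n} {..<nc}"
proof -
  obtain S where S: "finite S" "maximal S (\<lambda>T. T \<subseteq> set (cols A) \<and> lin_indpt T)"
    using maximal_exists_superset[of "set (cols A)" "(\<lambda>T. T \<subseteq> set (cols A) \<and> lin_indpt T)" "{}"]
  proof -
    have "lin_indpt {}"
      by (metis (no_types) empty_subsetI fin_dim finite_basis_exists subset_li_is_li vec_vs vectorspace.basis_def)
    then show ?thesis using that
      maximal_exists_superset[of "set (cols A)" "(\<lambda>T. T \<subseteq> set (cols A) \<and> lin_indpt T)" "{}"] by auto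
  qed
  have rS: "rank A = card S" using rank_card_indpt[OF A S(2)] .
  have PS: "S \<subseteq> set (cols A)" "lin_indpt S" using S(2) unfolding maximal_def by auto
  define ch where "ch = (\<lambda>s. SOME j. j < nc \<and> col A j = s)"
  have ch: "\<And>s. s \<in> S \<Longrightarrow> ch s < nc \<and> col A (ch s) = s"
  proof -
    fix s assume "s \<in> S"
    then have "\<exists>j. j < nc \<and> col A j = s" using PS A by (fastforce simp: cols_def)
    then show "ch s < nc \<and> col A (ch s) = s" unfolding ch_def by (rule someI_ex)
  qed
  define J where "J = ch ` S"
  have injch: "inj_on ch S" by (metis ch inj_onI)
  have cJ: "card J = card S" unfolding J_def by (rule card_image[OF injch])
  have J: "J \<subseteq> {..<nc}" using ch unfolding J_def by auto
  have fJ: "finite J" using J finite_subset by blast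
  have colJ: "col A ` J = S" unfolding J_def using ch by (auto simp: image_image)
  have injc: "inj_on (col A) J" unfolding J_def using ch by (intro inj_onI) auto
  let ?B = "colsub n A J"
  let ?js = "sorted_list_of_set J"
  let ?h = "\<lambda>l. ?js ! l"
  have inj: "inj_on ?h {..<card J}"
    using fJ by (metis distinct_sorted_list_of_set inj_on_nth length_sorted_list_of_set lessThan_iff)
  have img: "?h ` {..<card J} = J"
    using fJ by (rule img_sorted)
  note cf = colsub_facts[OF A J]
  have dist: "distinct (cols ?B)"
  proof -
    have "cols ?B = map (\<lambda>l. col A (?js ! l)) [0..<card J]"
      using cf(1,2) by (intro nth_equalityI) auto
    also have "\<dots> = map (col A) ?js" by (intro nth_equalityI) (auto simp: fJ)
    finally show ?thesis using injc fJ by (simp add: distinct_map)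
  qed
  have ind: "indep (\<lambda>i j. A $$ (i, j)) {..<n} J"
    unfolding indep_def
  proof (intro allI impI ballI)
    fix c j0 assume h: "\<forall>i\<in>{..<n}. (\<Sum>j\<in>J. c j * A $$ (i, j)) = 0" and j0: "j0 \<in> J"
    define v where "v = vec (card J) (\<lambda>l. c (?h l))"
    have v: "v \<in> carrier_vec (card J)" unfolding v_def by simp
    have "?B *\<^sub>v v = 0\<^sub>v n"
    proof (rule eq_vecI)
      fix i assume "i < dim_vec (0\<^sub>v n :: 'a vec)"
      then have i: "i < n" by simp
      have "(?B *\<^sub>v v) $ i = (\<Sum>j\<in>J. v $ (the_inv_into {..<card J} ?h j) * A $$ (i, j))"
        by (rule colsub_mult[OF A J i v])
      also have "\<dots> = (\<Sum>j\<in>J. c j * A $$ (i, j))"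
      proof (rule sum.cong)
        fix j assume "j \<in> J"
        then obtain l where l: "l < card J" "j = ?h l" using img by force
        then show "v $ (the_inv_into {..<card J} ?h j) * A $$ (i, j) = c j * A $$ (i, j)"
          by (simp add: the_inv_into_f_f[OF inj] v_def)
      qed simp
      finally show "(?B *\<^sub>v v) $ i = 0\<^sub>v n $ i" using h i by simp
    qed (use cf(1) in auto)
    moreover have "lin_indpt (set (cols ?B))" using cf(3) colJ PS by simp
    ultimately have "v = 0\<^sub>v (card J)" using lin_depI[OF cf(1) v _ _ dist] by blast
    moreover obtain l where l: "l < card J" "j0 = ?h l" using img j0 by force
    ultimately show "c j0 = 0" unfolding v_def by (metis index_vec index_zero_vec(1))
  qed
  show ?thesis using rk_ge[of "{..<nc}" J _ "{..<n}", OF _ J ind] rS cJ by simp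
qed

lemma rank_eq_rk:
  assumes A: "A \<in> carrier_mat n nc"
  shows "rank A = rk (\<lambda>i j. A $$ (i, j)) {..<n} {..<nc}"
proof (rule antisym)
  show "rank A \<le> rk (\<lambda>i j. A $$ (i, j)) {..<n} {..<nc}" by (rule rank_le_rk[OF A])
  obtain J where "J \<subseteq> {..<nc}" "indep (\<lambda>i j. A $$ (i, j)) {..<n} J"
     "card J = rk (\<lambda>i j. A $$ (i, j)) {..<n} {..<nc}" using rk_obtain[of "{..<nc}"] by blast
  then show "rk (\<lambda>i j. A $$ (i, j)) {..<n} {..<nc} \<le> rank A" using rk_le_rank[OF A] by metis
qed

end

lemma indep_reindex:
  assumes h: "inj_on h C'" and J: "J' \<subseteq> C'" and g: "g ` R' = R"
  shows "indep (\<lambda>i j. f (g i) (h j)) R' J' = indep f R (h ` J')"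
proof -
  have injJ: "inj_on h J'" using h J inj_on_subset by blast
  have sr: "\<And>c i. (\<Sum>j\<in>h ` J'. c j * f i j) = (\<Sum>j\<in>J'. c (h j) * f i (h j))"
    using sum.reindex[OF injJ] by simp
  show ?thesis
  proof
    assume ind: "indep (\<lambda>i j. f (g i) (h j)) R' J'"
    show "indep f R (h ` J')" unfolding indep_def
    proof (intro allI impI)
      fix c assume hc: "\<forall>i\<in>R. (\<Sum>j\<in>h ` J'. c j * f i j) = 0"
      have "\<forall>i\<in>R'. (\<Sum>j\<in>J'. (c \<circ> h) j * f (g i) (h j)) = 0" using hc sr g by auto
      then have "\<forall>j\<in>J'. (c \<circ> h) j = 0" using ind unfolding indep_def by blast
      then show "\<forall>j\<in>h ` J'. c j = 0" by auto
    qed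
  next
    assume ind: "indep f R (h ` J')"
    show "indep (\<lambda>i j. f (g i) (h j)) R' J'" unfolding indep_def
    proof (intro allI impI)
      fix c assume hc: "\<forall>i\<in>R'. (\<Sum>j\<in>J'. c j * f (g i) (h j)) = 0"
      define c' where "c' = (\<lambda>j. c (the_inv_into J' h j))"
      have c'h: "\<And>j. j \<in> J' \<Longrightarrow> c' (h j) = c j" unfolding c'_def by (simp add: the_inv_into_f_f[OF injJ])
      have "\<forall>i\<in>R. (\<Sum>j\<in>h ` J'. c' j * f i j) = 0"
      proof
        fix i assume "i \<in> R"
        then obtain i' where "i' \<in> R'" "i = g i'" using g by blast
        then show "(\<Sum>j\<in>h ` J'. c' j * f i j) = 0" using hc sr[of c' i] c'h by simp
      qed
      then have "\<forall>j\<in>h ` J'. c' j = 0" using ind unfolding indep_def by blast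
      then show "\<forall>j\<in>J'. c j = 0" using c'h by auto
    qed
  qed
qed

lemma rk_reindex:
  assumes h: "bij_betw h C' C" and g: "g ` R' = R"
  shows "rk (\<lambda>i j. f (g i) (h j)) R' C' = rk f R C"
proof -
  have hi: "inj_on h C'" and hC: "h ` C' = C" using h by (auto simp: bij_betw_def)
  have "{J. J \<subseteq> C \<and> indep f R J} = (\<lambda>J. h ` J) ` {J'. J' \<subseteq> C' \<and> indep (\<lambda>i j. f (g i) (h j)) R' J'}"
  proof (intro equalityI subsetI)
    fix J assume "J \<in> {J. J \<subseteq> C \<and> indep f R J}"
    then have J: "J \<subseteq> C" "indep f R J" by auto
    let ?J' = "C' \<inter> h -` J"
    have "h ` ?J' = J" using J(1) hC by auto
    moreover have "?J' \<subseteq> C'" by auto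
    ultimately show "J \<in> (\<lambda>J. h ` J) ` {J'. J' \<subseteq> C' \<and> indep (\<lambda>i j. f (g i) (h j)) R' J'}"
      using indep_reindex[OF hi _ g, of ?J' f] J(2) by auto
  next
    fix J assume "J \<in> (\<lambda>J. h ` J) ` {J'. J' \<subseteq> C' \<and> indep (\<lambda>i j. f (g i) (h j)) R' J'}"
    then obtain J' where "J = h ` J'" "J' \<subseteq> C'" "indep (\<lambda>i j. f (g i) (h j)) R' J'" by auto
    then show "J \<in> {J. J \<subseteq> C \<and> indep f R J}" using indep_reindex[OF hi _ g, of J' f] hC by auto
  qed
  then have "card ` {J. J \<subseteq> C \<and> indep f R J} = (\<lambda>J. card (h ` J)) ` {J'. J' \<subseteq> C' \<and> indep (\<lambda>i j. f (g i) (h j)) R' J'}"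
    by (simp add: image_image)
  also have "\<dots> = card ` {J'. J' \<subseteq> C' \<and> indep (\<lambda>i j. f (g i) (h j)) R' J'}"
    by (intro image_cong refl card_image) (use hi inj_on_subset in blast)
  finally show ?thesis unfolding rk_def by simp
qed

definition gm :: "('a \<Rightarrow> 'a \<Rightarrow> bool) \<Rightarrow> ('a \<Rightarrow> 'a \<Rightarrow> complex) \<Rightarrow> 'a \<Rightarrow> 'a \<Rightarrow> complex" where
  "gm E \<phi> x y = (if E x y then \<phi> x y else 0)"

definition am :: "('a \<Rightarrow> 'a \<Rightarrow> bool) \<Rightarrow> 'a \<Rightarrow> 'a \<Rightarrow> real" where
  "am E x y = (if E x y then 1 else 0)"

lemma sorted_bij: "finite V \<Longrightarrow> bij_betw (\<lambda>l. sorted_list_of_set V ! l) {..<card V} V"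
  unfolding bij_betw_def using img_sorted
  by (metis distinct_sorted_list_of_set inj_on_nth length_sorted_list_of_set lessThan_iff)

lemma gain_rank_rk:
  assumes "finite V"
  shows "gain_rank V E \<phi> = rk (gm E \<phi>) V V"
proof -
  let ?h = "\<lambda>l. sorted_list_of_set V ! l"
  have "gain_rank V E \<phi> = rk (\<lambda>i j. gain_adj_mat V E \<phi> $$ (i, j)) {..<card V} {..<card V}"
    unfolding gain_rank_def
    by (rule vec_space.rank_eq_rk) (simp add: gain_adj_mat_def Let_def)
  also have "\<dots> = rk (\<lambda>i j. gm E \<phi> (?h i) (?h j)) {..<card V} {..<card V}"
    by (rule rk_cong) (simp add: gain_adj_mat_def Let_def gm_def)
  also have "\<dots> = rk (gm E \<phi>) V V"
    by (rule rk_reindex[OF sorted_bij[OF assms]]) (use img_sorted[OF assms] in simp)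
  finally show ?thesis .
qed

lemma graph_rank_rk:
  assumes "finite V"
  shows "graph_rank V E = rk (am E) V V"
proof -
  let ?h = "\<lambda>l. sorted_list_of_set V ! l"
  have "graph_rank V E = rk (\<lambda>i j. adj_mat V E $$ (i, j)) {..<card V} {..<card V}"
    unfolding graph_rank_def
    by (rule vec_space.rank_eq_rk) (simp add: adj_mat_def Let_def)
  also have "\<dots> = rk (\<lambda>i j. am E (?h i) (?h j)) {..<card V} {..<card V}"
    by (rule rk_cong) (simp add: adj_mat_def Let_def am_def)
  also have "\<dots> = rk (am E) V V"
    by (rule rk_reindex[OF sorted_bij[OF assms]]) (use img_sorted[OF assms] in simp)
  finally show ?thesis .
qed

lemma sg_sym: "simple_graph V E \<Longrightarrow> E a b \<Longrightarrow> E b a" unfolding simple_graph_def by blast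
lemma sg_in: "simple_graph V E \<Longrightarrow> E a b \<Longrightarrow> a \<in> V \<and> b \<in> V" unfolding simple_graph_def by blast
lemma sg_irr: "simple_graph V E \<Longrightarrow> \<not> E a a" unfolding simple_graph_def by blast
lemma sg_fin: "simple_graph V E \<Longrightarrow> finite V" unfolding simple_graph_def by blast

lemma sg_del: "simple_graph V E \<Longrightarrow> simple_graph (V - {x}) (del_vert_rel E x)"
  unfolding simple_graph_def del_vert_rel_def by blast

lemma rtc_sym:
  assumes "\<And>a b. E a b \<Longrightarrow> E b a" "E\<^sup>*\<^sup>* a b" shows "E\<^sup>*\<^sup>* b a"
  using assms(2) by induction (auto intro: converse_rtranclp_into_rtranclp assms(1))

lemma rtc_in:
  assumes "simple_graph V E" "E\<^sup>*\<^sup>* a b" "a \<in> V" shows "b \<in> V"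
  using assms(2,3) by induction (use sg_in[OF assms(1)] in auto)

lemma del_mono: "(del_vert_rel E x)\<^sup>*\<^sup>* a b \<Longrightarrow> E\<^sup>*\<^sup>* a b"
  by (induction rule: rtranclp.induct) (auto simp: del_vert_rel_def intro: rtranclp.rtrancl_into_rtrancl)

lemma del_avoid:
  assumes "E\<^sup>*\<^sup>* y z" "\<not> E\<^sup>*\<^sup>* y x" shows "(del_vert_rel E x)\<^sup>*\<^sup>* y z"
  using assms
proof (induction rule: rtranclp_induct)
  case base then show ?case by simp
next
  case (step z1 z)
  have "z1 \<noteq> x" using step by auto
  moreover have "z \<noteq> x" using step by (metis rtranclp.rtrancl_into_rtrancl)
  ultimately have "del_vert_rel E x z1 z" using step by (simp add: del_vert_rel_def)
  then show ?case using step by (meson rtranclp.rtrancl_into_rtrancl)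
qed

lemma del_reach_nbr:
  assumes "E\<^sup>*\<^sup>* y x" "y \<noteq> x" "\<And>a b. E a b \<Longrightarrow> E b a"
  shows "\<exists>m. E x m \<and> (del_vert_rel E x)\<^sup>*\<^sup>* y m"
  using assms(1,2)
proof (induction rule: converse_rtranclp_induct)
  case base then show ?case by simp
next
  case (step y y1)
  show ?case
  proof (cases "y1 = x")
    case True
    then show ?thesis using step assms(3) by auto
  next
    case False
    then obtain m where m: "E x m" "(del_vert_rel E x)\<^sup>*\<^sup>* y1 m" using step by auto
    have "del_vert_rel E x y y1" using step False by (simp add: del_vert_rel_def)
    then show ?thesis using m by (meson converse_rtranclp_into_rtranclp)
  qed
qed

definition crel :: "'a set \<Rightarrow> ('a \<Rightarrow> 'a \<Rightarrow> bool) \<Rightarrow> ('a \<times> 'a) set" where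
  "crel V E = {(x, y). x \<in> V \<and> y \<in> V \<and> E\<^sup>*\<^sup>* x y}"

lemma crel_equiv:
  assumes "\<And>a b. E a b \<Longrightarrow> E b a" shows "equiv V (crel V E)"
  unfolding equiv_def refl_on_def sym_def trans_def crel_def
  using rtc_sym[OF assms] by (auto intro: rtranclp_trans)

lemma num_components_crel: "num_components V E = card (V // crel V E)"
  unfolding num_components_def crel_def by simp

lemma comp_bound:
  assumes sg: "simple_graph V E" and x: "x \<in> V"
  shows "num_components (V - {x}) (del_vert_rel E x) + 1 \<le>
     num_components V E + card ((\<lambda>y. crel (V - {x}) (del_vert_rel E x) `` {y}) ` {y. E x y})"
proof -
  let ?E' = "del_vert_rel E x" and ?V' = "V - {x}"
  let ?R = "crel V E" and ?R' = "crel ?V' ?E'"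
  let ?N = "{y. E x y}"
  let ?cl = "\<lambda>y. ?R' `` {y}"
  have sym: "\<And>a b. E a b \<Longrightarrow> E b a" using sg_sym[OF sg] .
  have sym': "\<And>a b. ?E' a b \<Longrightarrow> ?E' b a" using sym by (auto simp: del_vert_rel_def)
  have eq: "equiv V ?R" by (rule crel_equiv[OF sym])
  have eq': "equiv ?V' ?R'" by (rule crel_equiv[OF sym'])
  have fV: "finite V" using sg_fin[OF sg] .
  have fQ: "finite (V // ?R)" using fV by (simp add: finite_quotient eq equiv_type)
  have "?N \<subseteq> V" using sg_in[OF sg] by auto
  then have fN: "finite ?N" using fV finite_subset by blast
  have xc: "?R `` {x} \<in> V // ?R" using x by (simp add: quotientI)
  have sub: "?V' // ?R' \<subseteq> (V // ?R - {?R `` {x}}) \<union> ?cl ` ?N"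
  proof
    fix D assume "D \<in> ?V' // ?R'"
    then obtain y where y: "y \<in> ?V'" "D = ?R' `` {y}" by (auto elim: quotientE)
    show "D \<in> (V // ?R - {?R `` {x}}) \<union> ?cl ` ?N"
    proof (cases "E\<^sup>*\<^sup>* y x")
      case True
      then obtain m where m: "E x m" "?E'\<^sup>*\<^sup>* y m" using del_reach_nbr[OF True _ sym] y by auto
      have "m \<in> ?V'" using sg_in[OF sg m(1)] sg_irr[OF sg, of x] m(1) by auto
      then have "(y, m) \<in> ?R'" using y m by (simp add: crel_def)
      then have "D = ?cl m" using y eq' by (simp add: equiv_class_eq)
      then show ?thesis using m by auto
    next
      case False
      have "?R' `` {y} = ?R `` {y}"
      proof (intro equalityI subsetI)
        fix z assume "z \<in> ?R' `` {y}"
        then show "z \<in> ?R `` {y}" by (auto simp: crel_def dest: del_mono)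
      next
        fix z assume "z \<in> ?R `` {y}"
        then have z: "z \<in> V" "E\<^sup>*\<^sup>* y z" by (auto simp: crel_def)
        have "z \<noteq> x" using z False by auto
        then show "z \<in> ?R' `` {y}" using z y del_avoid[OF z(2) False] by (auto simp: crel_def)
      qed
      moreover have "?R `` {y} \<in> V // ?R" using y by (auto intro: quotientI)
      moreover have "?R `` {y} \<noteq> ?R `` {x}"
      proof
        assume "?R `` {y} = ?R `` {x}"
        moreover have "x \<in> ?R `` {x}" using x by (auto simp: crel_def)
        ultimately have "x \<in> ?R `` {y}" by simp
        then show False using False by (auto simp: crel_def)
      qed
      ultimately show ?thesis using y by auto
    qed
  qed
  have "card (?V' // ?R') \<le> card ((V // ?R - {?R `` {x}}) \<union> ?cl ` ?N)"
    by (rule card_mono[OF _ sub]) (use fQ fN in auto)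
  also have "\<dots> \<le> card (V // ?R - {?R `` {x}}) + card (?cl ` ?N)" by (rule card_Un_le)
  also have "card (V // ?R - {?R `` {x}}) = card (V // ?R) - 1" using xc fQ by simp
  finally have "card (?V' // ?R') \<le> card (V // ?R) - 1 + card (?cl ` ?N)" .
  moreover have "card (V // ?R) \<ge> 1" using xc fQ by (metis card_0_eq empty_iff less_one not_le)
  ultimately show ?thesis unfolding num_components_crel by arith
qed

lemma edges_del:
  assumes sg: "simple_graph V E"
  shows "num_edges (del_vert_rel E x) + degree E x = num_edges E"
proof -
  let ?E' = "del_vert_rel E x"
  let ?ES = "\<lambda>E. {{a, b} | a b. E a b}"
  let ?X = "(\<lambda>y. {x, y}) ` {y. E x y}"
  have fV: "finite V" using sg_fin[OF sg] .
  have "?ES E \<subseteq> Pow V" using sg_in[OF sg] by auto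
  moreover have "finite (Pow V)" using fV by simp
  ultimately have fE: "finite (?ES E)" by (rule finite_subset)
  have split: "?ES E = ?ES ?E' \<union> ?X"
  proof (intro equalityI subsetI)
    fix e assume "e \<in> ?ES E"
    then obtain a b where e: "e = {a, b}" "E a b" by auto
    show "e \<in> ?ES ?E' \<union> ?X"
    proof (cases "a = x")
      case True then show ?thesis using e by auto
    next
      case False
      show ?thesis
      proof (cases "b = x")
        case True then show ?thesis using e sg_sym[OF sg e(2)] by (auto simp: insert_commute)
      next
        case False
        then show ?thesis using e \<open>a \<noteq> x\<close> by (auto simp: del_vert_rel_def)
      qed
    qed
  next
    fix e assume "e \<in> ?ES ?E' \<union> ?X"
    then show "e \<in> ?ES E" by (auto simp: del_vert_rel_def)
  qed
  have disj: "?ES ?E' \<inter> ?X = {}"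
  proof -
    { fix e assume e1: "e \<in> ?ES ?E'" and e2: "e \<in> ?X"
      from e1 obtain a b where ab: "e = {a, b}" "a \<noteq> x" "b \<noteq> x" by (auto simp: del_vert_rel_def)
      moreover have "x \<in> e" using e2 by blast
      ultimately have False by blast }
    then show ?thesis by blast
  qed
  have inj: "inj_on (\<lambda>y. {x, y}) {y. E x y}"
    by (intro inj_onI) (use sg_irr[OF sg] in \<open>auto simp: doubleton_eq_iff\<close>)
  have "num_edges E = card (?ES ?E') + card ?X"
    unfolding num_edges_def split
    by (rule card_Un_disjoint) (use fE split disj in \<open>auto intro: finite_subset\<close>)
  also have "card ?X = degree E x" unfolding degree_def by (rule card_image[OF inj])
  finally show ?thesis unfolding num_edges_def by simp
qed

lemma card_image_remove:
  assumes "finite S" "T \<subseteq> S" "f ` S = f ` (S - T)"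
  shows "card (f ` S) + card T \<le> card S"
proof -
  have "card (f ` S) \<le> card (S - T)" using assms(3) card_image_le assms(1) by (metis finite_Diff)
  moreover have "card (S - T) = card S - card T" using assms(1,2) card_Diff_subset finite_subset by blast
  moreover have "card T \<le> card S" using assms card_mono by blast
  ultimately show ?thesis by linarith
qed

abbreviation cl :: "'a set \<Rightarrow> ('a \<Rightarrow> 'a \<Rightarrow> bool) \<Rightarrow> 'a \<Rightarrow> 'a \<Rightarrow> 'a set" where
  "cl V E x y \<equiv> crel (V - {x}) (del_vert_rel E x) `` {y}"

lemma theta_del_gen:
  assumes sg: "simple_graph V E" and x: "x \<in> V"
    and T: "T \<subseteq> {y. E x y}" "cl V E x ` {y. E x y} = cl V E x ` ({y. E x y} - T)"
  shows "theta (V - {x}) (del_vert_rel E x) + int (card T) \<le> theta V E"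
proof -
  let ?N = "{y. E x y}"
  have "?N \<subseteq> V" using sg_in[OF sg] by auto
  then have fN: "finite ?N" using sg_fin[OF sg] finite_subset by blast
  have c: "num_components (V - {x}) (del_vert_rel E x) + 1 \<le> num_components V E + card (cl V E x ` ?N)"
    by (rule comp_bound[OF sg x])
  have k: "card (cl V E x ` ?N) + card T \<le> degree E x"
    unfolding degree_def by (rule card_image_remove[OF fN T])
  have e: "num_edges (del_vert_rel E x) + degree E x = num_edges E" by (rule edges_del[OF sg])
  have cv: "card (V - {x}) + 1 = card V" using card.remove[OF sg_fin[OF sg] x] by simp
  show ?thesis unfolding theta_def using c k e cv by linarith
qed

lemma theta_del_le:
  assumes sg: "simple_graph V E" and x: "x \<in> V"
  shows "theta (V - {x}) (del_vert_rel E x) \<le> theta V E"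
  using theta_del_gen[OF sg x, of "{}"] by simp

lemma theta_del_drop1:
  assumes sg: "simple_graph V E" and x: "x \<in> V"
    and ab: "a \<noteq> b" "E x a" "E x b" "(del_vert_rel E x)\<^sup>*\<^sup>* a b"
  shows "theta (V - {x}) (del_vert_rel E x) + 1 \<le> theta V E"
proof -
  have inV: "a \<in> V - {x}" "b \<in> V - {x}" using sg_in[OF sg] sg_irr[OF sg] ab by blast+
  have eq: "equiv (V - {x}) (crel (V - {x}) (del_vert_rel E x))"
    by (rule crel_equiv) (use sg_sym[OF sg] in \<open>auto simp: del_vert_rel_def\<close>)
  have "(a, b) \<in> crel (V - {x}) (del_vert_rel E x)" using ab inV by (simp add: crel_def)
  then have clab: "cl V E x a = cl V E x b" by (rule equiv_class_eq[OF eq])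
  have "cl V E x ` {y. E x y} \<subseteq> cl V E x ` ({y. E x y} - {b})"
  proof
    fix D assume "D \<in> cl V E x ` {y. E x y}"
    then obtain y where y: "E x y" "D = cl V E x y" by auto
    show "D \<in> cl V E x ` ({y. E x y} - {b})"
    proof (cases "y = b")
      case True
      then have "D = cl V E x a" using y clab by simp
      then show ?thesis using ab by blast
    next
      case False then show ?thesis using y by blast
    qed
  qed
  then have "cl V E x ` {y. E x y} = cl V E x ` ({y. E x y} - {b})" by blast
  then show ?thesis using theta_del_gen[OF sg x, of "{b}"] ab by simp
qed

definition walk :: "('a \<Rightarrow> 'a \<Rightarrow> bool) \<Rightarrow> 'a list \<Rightarrow> bool" where
  "walk E xs \<longleftrightarrow> (\<forall>i. Suc i < length xs \<longrightarrow> E (xs ! i) (xs ! Suc i))"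

lemma walk_conn0:
  assumes "walk E xs" "j < length xs" shows "E\<^sup>*\<^sup>* (xs ! 0) (xs ! j)"
  using assms(2)
proof (induction j)
  case 0 then show ?case by simp
next
  case (Suc j)
  then have "E (xs ! j) (xs ! Suc j)" using assms(1) unfolding walk_def by blast
  then show ?case using Suc by (meson Suc_lessD rtranclp.rtrancl_into_rtrancl)
qed

lemma walk_conn:
  assumes sym: "\<And>a b. E a b \<Longrightarrow> E b a" and w: "walk E xs" and ab: "a \<in> set xs" "b \<in> set xs"
  shows "E\<^sup>*\<^sup>* a b"
proof -
  obtain i j where ij: "i < length xs" "j < length xs" "a = xs ! i" "b = xs ! j"
    using ab by (metis in_set_conv_nth)
  have "E\<^sup>*\<^sup>* a (xs ! 0)" using rtc_sym[OF sym walk_conn0[OF w ij(1)]] ij by simp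
  then show ?thesis using walk_conn0[OF w ij(2)] ij by (meson rtranclp_trans)
qed

lemma walk_del: "walk E xs \<Longrightarrow> x \<notin> set xs \<Longrightarrow> walk (del_vert_rel E x) xs"
  unfolding walk_def del_vert_rel_def by (metis Suc_lessD nth_mem)

lemma cycle_edges_sub: "e \<in> cycle_edges cs \<Longrightarrow> length cs > 0 \<Longrightarrow> e \<subseteq> set cs"
  unfolding cycle_edges_def by auto

lemma cyc_rot:
  assumes c: "is_cycle V E cs" and i: "i < length cs"
  defines "ds \<equiv> rotate i cs"
  shows "length ds = length cs" "distinct ds" "set ds = set cs"
    "\<And>k. k < length cs \<Longrightarrow> ds ! k = cs ! ((i + k) mod length cs)"
    "\<And>k. k < length cs \<Longrightarrow> E (ds ! k) (ds ! ((k + 1) mod length cs))"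
    "\<And>k. k < length cs \<Longrightarrow> {ds ! k, ds ! ((k + 1) mod length cs)} \<in> cycle_edges cs"
proof -
  let ?n = "length cs"
  have n: "?n \<ge> 3" "distinct cs" using c unfolding is_cycle_def by auto
  show "length ds = ?n" unfolding ds_def by simp
  show "distinct ds" using n unfolding ds_def by simp
  show "set ds = set cs" unfolding ds_def by simp
  show nth: "\<And>k. k < ?n \<Longrightarrow> ds ! k = cs ! ((i + k) mod ?n)"
    unfolding ds_def by (simp add: nth_rotate)
  have key: "\<And>k. k < ?n \<Longrightarrow> ds ! ((k + 1) mod ?n) = cs ! (((i + k) mod ?n + 1) mod ?n)"
  proof -
    fix k assume k: "k < ?n"
    have "0 < ?n" using n by linarith
    then have "(k + 1) mod ?n < ?n" by simp
    then have "ds ! ((k + 1) mod ?n) = cs ! ((i + (k + 1) mod ?n) mod ?n)" by (rule nth)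
    also have "(i + (k + 1) mod ?n) mod ?n = ((i + k) mod ?n + 1) mod ?n"
      by (simp add: mod_add_right_eq mod_add_left_eq add.assoc mod_Suc_eq)
    finally show "ds ! ((k + 1) mod ?n) = cs ! (((i + k) mod ?n + 1) mod ?n)" .
  qed
  show "\<And>k. k < ?n \<Longrightarrow> E (ds ! k) (ds ! ((k + 1) mod ?n))"
  proof -
    fix k assume k: "k < ?n"
    have "(i + k) mod ?n < ?n" by (rule mod_less_divisor) (use n in linarith)
    then show "E (ds ! k) (ds ! ((k + 1) mod ?n))" using c key[OF k] nth[OF k] unfolding is_cycle_def by simp
  qed
  show "\<And>k. k < ?n \<Longrightarrow> {ds ! k, ds ! ((k + 1) mod ?n)} \<in> cycle_edges cs"
  proof -
    fix k assume k: "k < ?n"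
    have "(i + k) mod ?n < ?n" by (rule mod_less_divisor) (use n in linarith)
    moreover have "{ds ! k, ds ! ((k + 1) mod ?n)} = {cs ! ((i + k) mod ?n), cs ! (((i + k) mod ?n + 1) mod ?n)}"
      using key[OF k] nth[OF k] by simp
    ultimately show "{ds ! k, ds ! ((k + 1) mod ?n)} \<in> cycle_edges cs"
      unfolding cycle_edges_def by (intro CollectI exI[of _ "(i + k) mod ?n"] conjI)
  qed
qed

lemma cyc_at:
  assumes sg: "simple_graph V E" and c: "is_cycle V E cs" and i: "i < length cs"
  defines "w \<equiv> cs ! i" and "x \<equiv> cs ! ((i + 1) mod length cs)"
  shows "\<exists>y. y \<noteq> x \<and> E w x \<and> E w y \<and> {w, x} \<in> cycle_edges cs \<and> {w, y} \<in> cycle_edges cs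
     \<and> (del_vert_rel E w)\<^sup>*\<^sup>* x y"
proof -
  let ?n = "length cs"
  let ?ds = "rotate i cs"
  note r = cyc_rot[OF c i]
  have n: "?n \<ge> 3" using c unfolding is_cycle_def by auto
  have ne: "cs \<noteq> []" using n by auto
  then have d0: "?ds ! 0 = w" using r(4)[of 0] n i unfolding w_def by simp
  have d1: "?ds ! 1 = x" using r(4)[of 1] n i unfolding x_def by simp
  define y where "y = ?ds ! (?n - 1)"
  have e1: "E w x" "{w, x} \<in> cycle_edges cs" using r(5,6)[of 0] n d0 d1 ne by auto
  have "E y w" "{y, w} \<in> cycle_edges cs" using r(5,6)[of "?n - 1"] n d0 ne unfolding y_def by auto
  then have e2: "E w y" "{w, y} \<in> cycle_edges cs" using sg_sym[OF sg] by (auto simp: insert_commute)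
  have "y \<noteq> x" unfolding y_def using d1[symmetric] r(1,2) n by (simp add: nth_eq_iff_index_eq)
  let ?ts = "drop 1 ?ds"
  have wt: "walk E ?ts" unfolding walk_def
  proof (intro allI impI)
    fix k assume k: "Suc k < length ?ts"
    then have "k + 1 < ?n" "(k + 1 + 1) mod ?n = k + 2" using r(1) by auto
    then show "E (?ts ! k) (?ts ! Suc k)" using r(5)[of "k + 1"] r(1) by simp
  qed
  have "?ds ! 0 # drop (Suc 0) ?ds = drop 0 ?ds" by (rule Cons_nth_drop_Suc) (use r(1) ne in simp)
  then have "?ds = w # ?ts" using d0 by simp
  then have "w \<notin> set ?ts" using r(2) by (metis distinct.simps(2))
  then have wt': "walk (del_vert_rel E w) ?ts" by (rule walk_del[OF wt])
  have lt: "length ?ts = ?n - 1" using r(1) by simp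
  have "?ts ! 0 = x" using d1 r(1) n by simp
  moreover have "?ts ! (?n - 2) = y" using r(1) n unfolding y_def by (simp add: Suc_diff_Suc numeral_2_eq_2)
  moreover have "0 < length ?ts" "?n - 2 < length ?ts" using lt n by arith+
  ultimately have "x \<in> set ?ts" "y \<in> set ?ts" by (metis nth_mem)+
  then have "(del_vert_rel E w)\<^sup>*\<^sup>* x y"
    by (intro walk_conn[OF _ wt']) (auto simp: del_vert_rel_def dest: sg_sym[OF sg])
  then show ?thesis using e1 e2 \<open>y \<noteq> x\<close> by blast
qed

lemma cl_eq:
  assumes sg: "simple_graph V E" and u: "E w u" "E w u'" and c: "(del_vert_rel E w)\<^sup>*\<^sup>* u u'"
  shows "cl V E w u = cl V E w u'"
proof -
  have inV: "u \<in> V - {w}" "u' \<in> V - {w}" using sg_in[OF sg] sg_irr[OF sg] u by blast+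
  have eq: "equiv (V - {w}) (crel (V - {w}) (del_vert_rel E w))"
    by (rule crel_equiv) (use sg_sym[OF sg] in \<open>auto simp: del_vert_rel_def\<close>)
  have "(u, u') \<in> crel (V - {w}) (del_vert_rel E w)" using c inV by (simp add: crel_def)
  then show ?thesis by (rule equiv_class_eq[OF eq])
qed

lemma img_remove:
  assumes "\<And>t. t \<in> T \<Longrightarrow> \<exists>s\<in>N - T. f t = f s"
  shows "f ` N = f ` (N - T)"
proof (intro equalityI subsetI)
  fix D assume "D \<in> f ` N"
  then obtain t where t: "t \<in> N" "D = f t" by auto
  show "D \<in> f ` (N - T)"
  proof (cases "t \<in> T")
    case True then show ?thesis using assms t by blast
  next
    case False then show ?thesis using t by blast
  qed
qed auto

lemma cycle_in_V: "is_cycle V E cs \<Longrightarrow> set cs \<subseteq> V" unfolding is_cycle_def by blast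

lemma on_cycle_drop1:
  assumes sg: "simple_graph V E" and oc: "on_cycle V E v"
  shows "theta (V - {v}) (del_vert_rel E v) + 1 \<le> theta V E"
proof -
  obtain cs where cs: "is_cycle V E cs" "v \<in> set cs" using oc unfolding on_cycle_def by blast
  obtain i where i: "i < length cs" "cs ! i = v" using cs(2) by (metis in_set_conv_nth)
  obtain y where y: "y \<noteq> cs ! ((i + 1) mod length cs)" "E v (cs ! ((i + 1) mod length cs))" "E v y"
    "(del_vert_rel E v)\<^sup>*\<^sup>* (cs ! ((i + 1) mod length cs)) y"
    using cyc_at[OF sg cs(1) i(1)] i(2) by blast
  have "v \<in> V" using cs cycle_in_V by blast
  then show ?thesis using theta_del_drop1[OF sg _ _ y(2,3,4)] y(1) by auto
qed

lemma drop2: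
  assumes sg: "simple_graph V E" and A: "is_cycle V E A" and B: "is_cycle V E B"
    and j: "j < length A" and wB: "A ! j \<in> set B"
    and nz: "{A ! j, A ! ((j + 1) mod length A)} \<notin> cycle_edges B"
  shows "A ! j \<in> V \<and> theta (V - {A ! j}) (del_vert_rel E (A ! j)) + 2 \<le> theta V E"
proof -
  define w where "w = A ! j"
  define z where "z = A ! ((j + 1) mod length A)"
  have wV: "w \<in> V" using A j cycle_in_V w_def by (metis nth_mem subsetD)
  obtain iB where iB: "iB < length B" "B ! iB = w" using wB w_def by (metis in_set_conv_nth)
  define x where "x = B ! ((iB + 1) mod length B)"
  obtain y where y: "y \<noteq> x" "E w x" "E w y" "{w, x} \<in> cycle_edges B" "{w, y} \<in> cycle_edges B"
    "(del_vert_rel E w)\<^sup>*\<^sup>* x y"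
    using cyc_at[OF sg B iB(1)] iB(2) unfolding x_def by blast
  obtain z' where z': "z' \<noteq> z" "E w z" "E w z'" "(del_vert_rel E w)\<^sup>*\<^sup>* z z'"
    using cyc_at[OF sg A j] unfolding w_def z_def by blast
  have zx: "z \<noteq> x" "z \<noteq> y" using nz y(4,5) unfolding w_def[symmetric] z_def[symmetric] by auto
  have cxy: "cl V E w x = cl V E w y" by (rule cl_eq[OF sg y(2,3,6)])
  have czz: "cl V E w z = cl V E w z'" by (rule cl_eq[OF sg z'(2,3,4)])
  obtain T where T: "T \<subseteq> {u. E w u}" "card T = 2" "\<And>t. t \<in> T \<Longrightarrow> \<exists>s\<in>{u. E w u} - T. cl V E w t = cl V E w s"
  proof (cases "z' = x")
    case True
    show ?thesis
      by (rule that[of "{y, z}"]) (use y z' zx True cxy czz in auto)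
  next
    case False
    show ?thesis
    proof (cases "z' = y")
      case True
      show ?thesis
        by (rule that[of "{x, z}"]) (use y z' zx True cxy czz in auto)
    next
      case False2: False
      show ?thesis
        by (rule that[of "{y, z'}"]) (use y z' zx False False2 cxy czz in auto)
    qed
  qed
  have "cl V E w ` {u. E w u} = cl V E w ` ({u. E w u} - T)" by (rule img_remove) (use T(3) in blast)
  then have "theta (V - {w}) (del_vert_rel E w) + int (card T) \<le> theta V E"
    by (rule theta_del_gen[OF sg wV T(1)])
  then show ?thesis using T(2) wV unfolding w_def by simp
qed

lemma drop2':
  assumes sg: "simple_graph V E" and A: "is_cycle V E A" and B: "is_cycle V E B"
    and v: "v \<in> set A" "v \<in> set B" and e: "e \<in> cycle_edges A" "e \<notin> cycle_edges B"
  shows "\<exists>w\<in>V. theta (V - {w}) (del_vert_rel E w) + 2 \<le> theta V E"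
proof -
  let ?n = "length A"
  have n: "?n \<ge> 3" using A unfolding is_cycle_def by auto
  have n0: "0 < ?n" using n by linarith
  obtain i0 where i0: "i0 < ?n" "A ! i0 = v" using v(1) by (metis in_set_conv_nth)
  obtain k where k: "k < ?n" "e = {A ! k, A ! ((k + 1) mod ?n)}" using e(1) unfolding cycle_edges_def by blast
  define P where "P = (\<lambda>m. m < ?n \<and> {A ! ((i0 + m) mod ?n), A ! (((i0 + m) mod ?n + 1) mod ?n)} \<notin> cycle_edges B)"
  define m1 where "m1 = (k + ?n - i0) mod ?n"
  have "(i0 + m1) mod ?n = k"
  proof -
    have "(i0 + m1) mod ?n = (i0 + (k + ?n - i0)) mod ?n" unfolding m1_def by (simp add: mod_add_right_eq)
    also have "i0 + (k + ?n - i0) = k + ?n" using i0 by simp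
    finally show ?thesis using k by simp
  qed
  then have "P m1" unfolding P_def m1_def using e(2) k n0 by simp
  define m0 where "m0 = (LEAST m. P m)"
  have Pm0: "P m0" unfolding m0_def by (rule LeastI[of P m1]) fact
  define j where "j = (i0 + m0) mod ?n"
  have j: "j < ?n" unfolding j_def using n0 by simp
  have nz: "{A ! j, A ! ((j + 1) mod ?n)} \<notin> cycle_edges B" using Pm0 unfolding P_def j_def by simp
  have wB: "A ! j \<in> set B"
  proof (cases "m0 = 0")
    case True
    then show ?thesis using i0 v(2) unfolding j_def by simp
  next
    case False
    then have "\<not> P (m0 - 1)" unfolding m0_def by (metis diff_less not_less_Least zero_less_iff_neq_zero less_one m0_def)
    moreover have "m0 - 1 < ?n" using Pm0 unfolding P_def by linarith
    ultimately have inB: "{A ! ((i0 + (m0 - 1)) mod ?n), A ! (((i0 + (m0 - 1)) mod ?n + 1) mod ?n)} \<in> cycle_edges B"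
      unfolding P_def by simp
    have "((i0 + (m0 - 1)) mod ?n + 1) mod ?n = (i0 + (m0 - 1) + 1) mod ?n" by (simp add: mod_Suc_eq)
    also have "i0 + (m0 - 1) + 1 = i0 + m0" using False by simp
    finally have "A ! j \<in> {A ! ((i0 + (m0 - 1)) mod ?n), A ! (((i0 + (m0 - 1)) mod ?n + 1) mod ?n)}"
      unfolding j_def by simp
    moreover have "length B > 0" using B unfolding is_cycle_def by auto
    ultimately show ?thesis using cycle_edges_sub[OF inB] by blast
  qed
  show ?thesis using drop2[OF sg A B j wB nz] by blast
qed

lemma not_one_cycle_drop2:
  assumes sg: "simple_graph V E" and oc: "on_cycle V E v" and no: "\<not> on_exactly_one_cycle V E v"
  shows "\<exists>w\<in>V. theta (V - {w}) (del_vert_rel E w) + 2 \<le> theta V E"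
proof -
  let ?S = "{cycle_edges cs | cs. is_cycle V E cs \<and> v \<in> set cs}"
  have sub: "?S \<subseteq> Pow (Pow V)"
  proof
    fix X assume "X \<in> ?S"
    then obtain cs where cs: "X = cycle_edges cs" "is_cycle V E cs" by blast
    then have "length cs > 0" "set cs \<subseteq> V" using cs(2) unfolding is_cycle_def by auto
    then show "X \<in> Pow (Pow V)" using cs cycle_edges_sub by blast
  qed
  have fS: "finite ?S" using finite_subset[OF sub] sg_fin[OF sg] by simp
  obtain A where A: "is_cycle V E A" "v \<in> set A" using oc unfolding on_cycle_def by blast
  have "\<exists>B. is_cycle V E B \<and> v \<in> set B \<and> cycle_edges B \<noteq> cycle_edges A"
  proof (rule ccontr)
    assume nb: "\<nexists>B. is_cycle V E B \<and> v \<in> set B \<and> cycle_edges B \<noteq> cycle_edges A"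
    have "?S = {cycle_edges A}"
    proof (intro equalityI subsetI)
      fix X assume "X \<in> ?S"
      then obtain cs where "X = cycle_edges cs" "is_cycle V E cs" "v \<in> set cs" by blast
      then show "X \<in> {cycle_edges A}" using nb by blast
    next
      fix X assume "X \<in> {cycle_edges A}"
      then show "X \<in> ?S" using A by blast
    qed
    then show False using no unfolding on_exactly_one_cycle_def by simp
  qed
  then obtain B where B: "is_cycle V E B" "v \<in> set B" "cycle_edges B \<noteq> cycle_edges A" by blast
  show ?thesis
  proof (cases "cycle_edges A \<subseteq> cycle_edges B")
    case True
    then obtain e where "e \<in> cycle_edges B" "e \<notin> cycle_edges A" using B(3) by blast
    then show ?thesis using drop2'[OF sg B(1) A(1) B(2) A(2)] by blast
  next
    case False
    then obtain e where "e \<in> cycle_edges A" "e \<notin> cycle_edges B" by blast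
    then show ?thesis using drop2'[OF sg A(1) B(1) A(2) B(2)] by blast
  qed
qed

lemma walk_snoc:
  assumes "walk E xs" "xs \<noteq> []" "E (last xs) y" shows "walk E (xs @ [y])"
  unfolding walk_def
proof (intro allI impI)
  fix i assume i: "Suc i < length (xs @ [y])"
  show "E ((xs @ [y]) ! i) ((xs @ [y]) ! Suc i)"
  proof (cases "Suc i < length xs")
    case True
    then show ?thesis using assms(1) unfolding walk_def by (simp add: nth_append)
  next
    case False
    then have "Suc i = length xs" using i by simp
    then have "i = length xs - 1" by simp
    then show ?thesis using assms(2,3) \<open>Suc i = length xs\<close> by (simp add: nth_append last_conv_nth)
  qed
qed

lemma walk_butlast: "walk E xs \<Longrightarrow> walk E (butlast xs)"
  unfolding walk_def by (simp add: nth_butlast)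

lemma maxpath:
  assumes sg: "simple_graph V E" and ne: "V \<noteq> {}"
  shows "\<exists>x\<in>V. degree E x = 0 \<or> (\<exists>w. {y. E x y} = {w})
     \<or> (\<exists>a b. a \<noteq> b \<and> E x a \<and> E x b \<and> (del_vert_rel E x)\<^sup>*\<^sup>* a b)"
proof -
  let ?P = "\<lambda>xs. xs \<noteq> [] \<and> distinct xs \<and> set xs \<subseteq> V \<and> walk E xs"
  have fV: "finite V" using sg_fin[OF sg] .
  obtain v0 where v0: "v0 \<in> V" using ne by blast
  have P0: "?P [v0]" using v0 by (simp add: walk_def)
  have bnd: "\<forall>xs. ?P xs \<longrightarrow> length xs < card V + 1"
  proof (intro allI impI)
    fix xs assume h: "?P xs"
    then have "card (set xs) \<le> card V" using fV card_mono by blast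
    moreover have "length xs = card (set xs)" using h distinct_card by metis
    ultimately show "length xs < card V + 1" by simp
  qed
  obtain xs where xs: "?P xs" "\<forall>ys. ?P ys \<longrightarrow> length ys \<le> length xs"
    using ex_has_greatest_nat[of ?P "[v0]" length "card V + 1"] P0 bnd by blast
  define x where "x = last xs"
  have xV: "x \<in> V" using xs(1) unfolding x_def by auto
  have nb: "\<And>y. E x y \<Longrightarrow> y \<in> set xs"
  proof (rule ccontr)
    fix y assume y: "E x y" "y \<notin> set xs"
    have "?P (xs @ [y])" using xs(1) y sg_in[OF sg y(1)] walk_snoc[of E xs y] unfolding x_def by auto
    then have "length (xs @ [y]) \<le> length xs" using xs(2) by blast
    then show False by simp
  qed
  have "?thesis"
  proof (cases "degree E x \<le> 1")
    case True
    then have "degree E x = 0 \<or> degree E x = 1" by linarith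
    then show ?thesis
    proof
      assume "degree E x = 0" then show ?thesis using xV by blast
    next
      assume "degree E x = 1"
      then obtain w where "{y. E x y} = {w}" unfolding degree_def by (metis card_1_singletonE)
      then show ?thesis using xV by blast
    qed
  next
    case False
    then have "card {y. E x y} \<ge> 2" unfolding degree_def by simp
    then have "\<not> card {y. E x y} \<le> Suc 0" by simp
    then obtain a b where ab: "a \<in> {y. E x y}" "b \<in> {y. E x y}" "a \<noteq> b"
      using card_le_Suc0_iff_eq[of "{y. E x y}"] by (metis card.infinite zero_le)
    have xsb: "xs = butlast xs @ [x]" using xs(1) unfolding x_def by simp
    have "distinct (butlast xs @ [x])" using xs(1) xsb by simp
    then have xn: "x \<notin> set (butlast xs)" by simp
    have wb: "walk E (butlast xs)" using walk_butlast xs(1) by blast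
    have w: "walk (del_vert_rel E x) (butlast xs)" by (rule walk_del[OF wb xn])
    have sxs: "set xs = insert x (set (butlast xs))" using xsb by (metis Un_insert_right empty_set list.simps(15) set_append sup_bot.right_neutral)
    have "a \<noteq> x" "b \<noteq> x" using ab sg_irr[OF sg, of x] by auto
    then have "a \<in> set (butlast xs)" "b \<in> set (butlast xs)" using nb ab sxs by auto
    then have "(del_vert_rel E x)\<^sup>*\<^sup>* a b"
      by (intro walk_conn[OF _ w]) (auto simp: del_vert_rel_def dest: sg_sym[OF sg])
    then show ?thesis using ab xV by blast
  qed
  then show ?thesis .
qed

definition supp :: "'a set \<Rightarrow> ('a \<Rightarrow> 'a \<Rightarrow> bool) \<Rightarrow> ('a \<Rightarrow> 'a \<Rightarrow> 'b::field) \<Rightarrow> bool" where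
  "supp V E f \<longleftrightarrow> (\<forall>x\<in>V. \<forall>y\<in>V. (f x y \<noteq> 0 \<longleftrightarrow> E x y))"

lemma supp_del: "supp V E f \<Longrightarrow> supp (V - {x}) (del_vert_rel E x) f"
  unfolding supp_def del_vert_rel_def by auto

lemma rk_del1:
  assumes "finite V" "x \<in> V"
  shows "rk f (V - {x}) (V - {x}) \<le> rk f V V" "rk f V V \<le> rk f (V - {x}) (V - {x}) + 2"
proof -
  show "rk f (V - {x}) (V - {x}) \<le> rk f V V" by (rule rk_mono) (use assms in auto)
  have "rk f V V \<le> rk f (V - {x}) V + 1" by (rule rk_del_row) (use assms in auto)
  also have "rk f (V - {x}) V \<le> rk f (V - {x}) (V - {x}) + 1" by (rule rk_del_col) (use assms in auto)
  finally show "rk f V V \<le> rk f (V - {x}) (V - {x}) + 2" by simp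
qed

lemma rk_iso:
  assumes sg: "simple_graph V E" and s: "supp V E f" and x: "x \<in> V" and d: "degree E x = 0"
  shows "rk f V V = rk f (V - {x}) (V - {x})"
proof -
  have fV: "finite V" using sg_fin[OF sg] .
  have nE: "\<And>y. \<not> E x y" using d fV sg_in[OF sg] unfolding degree_def
    by (metis (mono_tags, lifting) card_0_eq empty_iff finite_subset mem_Collect_eq subsetI)
  have z1: "\<And>j. j \<in> V \<Longrightarrow> f x j = 0" using s x nE unfolding supp_def by blast
  have z2: "\<And>i. i \<in> V - {x} \<Longrightarrow> f i x = 0" using s x nE sg_sym[OF sg] unfolding supp_def by blast
  have "rk f V V = rk f (V - {x}) V" by (rule rk_zero_row) (use z1 in blast)
  also have "\<dots> = rk f (V - {x}) (V - {x})" by (rule rk_zero_col) (use fV z2 in auto)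
  finally show ?thesis .
qed

lemma rk_pend:
  assumes sg: "simple_graph V E" and s: "supp V E f" and N: "{y. E u y} = {w}"
  shows "rk f V V = rk f (V - {u} - {w}) (V - {u} - {w}) + 2"
proof -
  have fV: "finite V" using sg_fin[OF sg] .
  have uw: "E u w" using N by blast
  have uV: "u \<in> V" "w \<in> V" "u \<noteq> w" using sg_in[OF sg uw] sg_irr[OF sg, of u] uw by auto
  have r1: "\<And>j. j \<in> V \<Longrightarrow> j \<noteq> w \<Longrightarrow> f u j = 0"
  proof -
    fix j assume "j \<in> V" "j \<noteq> w"
    then have "\<not> E u j" using N by blast
    then show "f u j = 0" using s uV \<open>j \<in> V\<close> unfolding supp_def by blast
  qed
  have c1: "\<And>i. i \<in> V \<Longrightarrow> i \<noteq> w \<Longrightarrow> f i u = 0"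
  proof -
    fix i assume "i \<in> V" "i \<noteq> w"
    then have "\<not> E i u" using N sg_sym[OF sg] by blast
    then show "f i u = 0" using s uV \<open>i \<in> V\<close> unfolding supp_def by blast
  qed
  have nz: "f u w \<noteq> 0" "f w u \<noteq> 0" using s uV uw sg_sym[OF sg uw] unfolding supp_def by blast+
  have ge: "rk f (V - {u} - {w}) (V - {u} - {w}) + 2 \<le> rk f V V"
    by (rule rk_pendant_ge[OF fV uV(3) uV(1,2) uV(1,2) r1 c1 nz])
  have "rk f V V \<le> rk f (V - {w}) V + 1" by (rule rk_del_row[OF fV])
  also have "rk f (V - {w}) V = rk f (V - {w}) (V - {u})" by (rule rk_zero_col) (use fV c1 in auto)
  also have "rk f (V - {w}) (V - {u}) \<le> rk f (V - {w}) (V - {u} - {w}) + 1" by (rule rk_del_col) (use fV in auto)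
  also have "rk f (V - {w}) (V - {u} - {w}) = rk f (V - {w} - {u}) (V - {u} - {w})" by (rule rk_zero_row) (use r1 in auto)
  also have "V - {w} - {u} = V - {u} - {w}" by auto
  finally show ?thesis using ge by simp
qed

lemma theta_empty: "simple_graph {} E \<Longrightarrow> theta {} E = 0"
proof -
  assume sg: "simple_graph {} E"
  have "\<And>a b. \<not> E a b" using sg_in[OF sg] by blast
  then have "num_edges E = 0" unfolding num_edges_def by simp
  then show ?thesis unfolding theta_def num_components_def by simp
qed

lemma rk_empty: "rk f {} {} = 0"
proof -
  have "{J. J \<subseteq> {} \<and> indep f {} J} = {{}}" using indep_empty by auto
  then show ?thesis unfolding rk_def by simp
qed

theorem rank_bound:
  fixes f :: "'a \<Rightarrow> 'a \<Rightarrow> 'b::field" and g :: "'a \<Rightarrow> 'a \<Rightarrow> 'c::field"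
  assumes "simple_graph V E" "supp V E f" "supp V E g"
  shows "int (rk g V V) - 2 * theta V E \<le> int (rk f V V)"
  using assms
proof (induction "card V" arbitrary: V E rule: less_induct)
  case less
  note sg = less.prems(1)
  have fV: "finite V" using sg_fin[OF sg] .
  show ?case
  proof (cases "V = {}")
    case True
    have "theta V E = 0" using theta_empty sg True by simp
    then show ?thesis using rk_empty[of f] rk_empty[of g] True by simp
  next
    case False
    obtain x where x: "x \<in> V" and cs: "degree E x = 0 \<or> (\<exists>w. {y. E x y} = {w})
       \<or> (\<exists>a b. a \<noteq> b \<and> E x a \<and> E x b \<and> (del_vert_rel E x)\<^sup>*\<^sup>* a b)"
      using maxpath[OF sg False] by blast
    let ?V' = "V - {x}" and ?E' = "del_vert_rel E x"
    have sg': "simple_graph ?V' ?E'" by (rule sg_del[OF sg])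
    have c': "card ?V' < card V" using x fV by (meson card_Diff1_less)
    have IH': "int (rk g ?V' ?V') - 2 * theta ?V' ?E' \<le> int (rk f ?V' ?V')"
      by (rule less.hyps[OF c' sg' supp_del[OF less.prems(2)] supp_del[OF less.prems(3)]])
    have th': "theta ?V' ?E' \<le> theta V E" by (rule theta_del_le[OF sg x])
    consider "degree E x = 0" | w where "{y. E x y} = {w}"
      | a b where "a \<noteq> b" "E x a" "E x b" "(del_vert_rel E x)\<^sup>*\<^sup>* a b"
      using cs by (elim disjE exE conjE) iprover+
    then show ?thesis
    proof cases
      case 1
      have "rk f V V = rk f ?V' ?V'" "rk g V V = rk g ?V' ?V'"
        using rk_iso[OF sg less.prems(2) x 1] rk_iso[OF sg less.prems(3) x 1] by auto
      then show ?thesis using IH' th' by simp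
    next
      case (2 w)
      have xw: "E x w" using 2 by blast
      have wV: "w \<in> ?V'" using sg_in[OF sg xw] sg_irr[OF sg, of x] xw by auto
      let ?V'' = "?V' - {w}" and ?E'' = "del_vert_rel ?E' w"
      have sg'': "simple_graph ?V'' ?E''" by (rule sg_del[OF sg'])
      have c'': "card ?V'' < card V" using c' wV fV by (metis card_Diff1_less finite_Diff order.strict_trans)
      have IH'': "int (rk g ?V'' ?V'') - 2 * theta ?V'' ?E'' \<le> int (rk f ?V'' ?V'')"
        by (rule less.hyps[OF c'' sg'' supp_del[OF supp_del[OF less.prems(2)]] supp_del[OF supp_del[OF less.prems(3)]]])
      have th'': "theta ?V'' ?E'' \<le> theta ?V' ?E'" by (rule theta_del_le[OF sg' wV])
      have "rk f V V = rk f ?V'' ?V'' + 2" "rk g V V = rk g ?V'' ?V'' + 2"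
        using rk_pend[OF sg less.prems(2) 2] rk_pend[OF sg less.prems(3) 2] by auto
      then show ?thesis using IH'' th'' th' by simp
    next
      case (3 a b)
      have th1: "theta ?V' ?E' + 1 \<le> theta V E" by (rule theta_del_drop1[OF sg x 3])
      have "rk f ?V' ?V' \<le> rk f V V" "rk g V V \<le> rk g ?V' ?V' + 2"
        using rk_del1[OF fV x] by auto
      then show ?thesis using IH' th1 by linarith
    qed
  qed
qed

lemma supp_gm: "cu_gain_graph V E \<phi> \<Longrightarrow> supp V E (gm E \<phi>)"
  unfolding supp_def gm_def cu_gain_graph_def by (metis norm_zero zero_neq_one)

lemma supp_am: "supp V E (am E)"
  unfolding supp_def am_def by simp

lemma cycle_avoid:
  assumes sg: "simple_graph V E" and c: "is_cycle V E cs" and N: "{y. E u y} = {w}"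
  shows "u \<notin> set cs"
proof
  assume "u \<in> set cs"
  then obtain i where i: "i < length cs" "cs ! i = u" by (metis in_set_conv_nth)
  obtain y where y: "y \<noteq> cs ! ((i + 1) mod length cs)" "E u (cs ! ((i + 1) mod length cs))" "E u y"
    using cyc_at[OF sg c i(1)] i(2) by blast
  then have "y \<in> {w}" "cs ! ((i + 1) mod length cs) \<in> {w}" using N by blast+
  then show False using y(1) by simp
qed

lemma cycle_del:
  assumes c: "is_cycle V E cs" and u: "u \<notin> set cs"
  shows "is_cycle (V - {u}) (del_vert_rel E u) cs"
proof -
  have n: "length cs > 0" using c unfolding is_cycle_def by auto
  show ?thesis using c u n unfolding is_cycle_def del_vert_rel_def
    by (auto intro!: nth_mem dest: nth_mem)
qed

theorem lemma4p1:
  fixes V :: "'a::linorder set" and E :: "'a \<Rightarrow> 'a \<Rightarrow> bool"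
    and \<phi> :: "'a \<Rightarrow> 'a \<Rightarrow> complex" and v :: 'a
  assumes "cu_gain_graph V E \<phi>"
    and "v \<in> V"
    and "on_cycle V E v"
  shows
   "(int (gain_rank V E \<phi>) = int (graph_rank V E) - 2 * theta V E \<longrightarrow>
       gain_rank V E \<phi> = gain_rank (del_vert_set V v) (del_vert_rel E v) \<phi>
     \<and> int (graph_rank (del_vert_set V v) (del_vert_rel E v)) = int (graph_rank V E) - 2
     \<and> theta V E = theta (del_vert_set V v) (del_vert_rel E v) + 1)
  \<and> (int (gain_rank V E \<phi>) = int (graph_rank V E) + 2 * theta V E \<longrightarrow>
       gain_rank V E \<phi> = gain_rank (del_vert_set V v) (del_vert_rel E v) \<phi> + 2
     \<and> graph_rank (del_vert_set V v) (del_vert_rel E v) = graph_rank V E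
     \<and> theta V E = theta (del_vert_set V v) (del_vert_rel E v) + 1)
  \<and> (int (gain_rank V E \<phi>) = int (graph_rank V E) - 2 * theta V E \<longrightarrow>
       int (gain_rank (del_vert_set V v) (del_vert_rel E v) \<phi>)
         = int (graph_rank (del_vert_set V v) (del_vert_rel E v))
           - 2 * theta (del_vert_set V v) (del_vert_rel E v)
     \<and> on_exactly_one_cycle V E v \<and> \<not> quasi_pendant E v)
  \<and> (int (gain_rank V E \<phi>) = int (graph_rank V E) + 2 * theta V E \<longrightarrow>
       int (gain_rank (del_vert_set V v) (del_vert_rel E v) \<phi>)
         = int (graph_rank (del_vert_set V v) (del_vert_rel E v))
           + 2 * theta (del_vert_set V v) (del_vert_rel E v)
     \<and> on_exactly_one_cycle V E v \<and> \<not> quasi_pendant E v)"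
proof -
  note cu = assms(1) and vV = assms(2) and oc = assms(3)
  have sg: "simple_graph V E" using cu unfolding cu_gain_graph_def by blast
  have fV: "finite V" using sg_fin[OF sg] .
  define f where "f = gm E \<phi>"
  define g where "g = am E"
  have sf: "supp V E f" unfolding f_def by (rule supp_gm[OF cu])
  have sgg: "supp V E g" unfolding g_def by (rule supp_am)
  have gr0: "gain_rank V E \<phi> = rk f V V" "graph_rank V E = rk g V V"
    unfolding f_def g_def using gain_rank_rk[OF fV] graph_rank_rk[OF fV] by auto
  have gr1: "gain_rank (V - {v}) (del_vert_rel E v) \<phi> = rk f (V - {v}) (V - {v})"
    "graph_rank (V - {v}) (del_vert_rel E v) = rk g (V - {v}) (V - {v})"
  proof -
    have fV': "finite (V - {v})" using fV by simp
    show "gain_rank (V - {v}) (del_vert_rel E v) \<phi> = rk f (V - {v}) (V - {v})"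
      unfolding gain_rank_rk[OF fV'] f_def by (rule rk_cong) (auto simp: gm_def del_vert_rel_def)
    show "graph_rank (V - {v}) (del_vert_rel E v) = rk g (V - {v}) (V - {v})"
      unfolding graph_rank_rk[OF fV'] g_def by (rule rk_cong) (auto simp: am_def del_vert_rel_def)
  qed
  define P where "P = int (rk f V V)"
  define G where "G = int (rk g V V)"
  define P' where "P' = int (rk f (V - {v}) (V - {v}))"
  define G' where "G' = int (rk g (V - {v}) (V - {v}))"
  define th where "th = theta V E"
  define th' where "th' = theta (V - {v}) (del_vert_rel E v)"
  have sg': "simple_graph (V - {v}) (del_vert_rel E v)" by (rule sg_del[OF sg])
  have a1: "P' \<le> P" "P \<le> P' + 2" "G' \<le> G" "G \<le> G' + 2"
    unfolding P_def P'_def G_def G'_def using rk_del1[OF fV vV, of f] rk_del1[OF fV vV, of g] by auto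
  have b1: "G' - 2 * th' \<le> P'" "P' \<le> G' + 2 * th'"
    unfolding P'_def G'_def th'_def
    using rank_bound[OF sg' supp_del[OF sf] supp_del[OF sgg]] rank_bound[OF sg' supp_del[OF sgg] supp_del[OF sf]]
    by auto
  have c1: "th' + 1 \<le> th" unfolding th_def th'_def by (rule on_cycle_drop1[OF sg oc])
  have one: "P = G - 2 * th \<or> P = G + 2 * th \<Longrightarrow> on_exactly_one_cycle V E v"
  proof (rule ccontr)
    assume eqs: "P = G - 2 * th \<or> P = G + 2 * th" and no: "\<not> on_exactly_one_cycle V E v"
    obtain w where w: "w \<in> V" "theta (V - {w}) (del_vert_rel E w) + 2 \<le> theta V E"
      using not_one_cycle_drop2[OF sg oc no] by blast
    have sgw: "simple_graph (V - {w}) (del_vert_rel E w)" by (rule sg_del[OF sg])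
    have "int (rk f (V - {w}) (V - {w})) \<le> P" "P \<le> int (rk f (V - {w}) (V - {w})) + 2"
      "G \<le> int (rk g (V - {w}) (V - {w})) + 2" "int (rk g (V - {w}) (V - {w})) \<le> G"
      unfolding P_def G_def using rk_del1[OF fV w(1), of f] rk_del1[OF fV w(1), of g] by auto
    moreover have "int (rk g (V - {w}) (V - {w})) - 2 * theta (V - {w}) (del_vert_rel E w) \<le> int (rk f (V - {w}) (V - {w}))"
      "int (rk f (V - {w}) (V - {w})) - 2 * theta (V - {w}) (del_vert_rel E w) \<le> int (rk g (V - {w}) (V - {w}))"
      using rank_bound[OF sgw supp_del[OF sf] supp_del[OF sgg]] rank_bound[OF sgw supp_del[OF sgg] supp_del[OF sf]]
      by auto
    ultimately show False using eqs w(2) unfolding th_def by linarith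
  qed
  have nqp: "P = G - 2 * th \<or> P = G + 2 * th \<Longrightarrow> \<not> quasi_pendant E v"
  proof
    assume eqs: "P = G - 2 * th \<or> P = G + 2 * th" and qp: "quasi_pendant E v"
    obtain u where u: "E v u" "degree E u = 1" using qp unfolding quasi_pendant_def by blast
    have N: "{y. E u y} = {v}"
    proof -
      obtain z where z: "{y. E u y} = {z}" using u(2) unfolding degree_def by (metis card_1_singletonE)
      have "E u v" using sg_sym[OF sg u(1)] .
      then have "v \<in> {z}" using z by blast
      then show ?thesis using z by simp
    qed
    have uV: "u \<in> V" "u \<noteq> v" using sg_in[OF sg u(1)] sg_irr[OF sg, of v] u(1) by auto
    obtain cs where cs: "is_cycle V E cs" "v \<in> set cs" using oc unfolding on_cycle_def by blast
    have "u \<notin> set cs" by (rule cycle_avoid[OF sg cs(1) N])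
    then have oc': "on_cycle (V - {u}) (del_vert_rel E u) v"
      using cycle_del[OF cs(1)] cs(2) unfolding on_cycle_def by blast
    have sgu: "simple_graph (V - {u}) (del_vert_rel E u)" by (rule sg_del[OF sg])
    have t1: "theta (V - {u} - {v}) (del_vert_rel (del_vert_rel E u) v) + 1 \<le> theta (V - {u}) (del_vert_rel E u)"
      by (rule on_cycle_drop1[OF sgu oc'])
    have t2: "theta (V - {u}) (del_vert_rel E u) \<le> theta V E" by (rule theta_del_le[OF sg uV(1)])
    have sguv: "simple_graph (V - {u} - {v}) (del_vert_rel (del_vert_rel E u) v)" by (rule sg_del[OF sgu])
    have "rk f V V = rk f (V - {u} - {v}) (V - {u} - {v}) + 2" "rk g V V = rk g (V - {u} - {v}) (V - {u} - {v}) + 2"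
      using rk_pend[OF sg sf N] rk_pend[OF sg sgg N] by auto
    moreover have "int (rk g (V - {u} - {v}) (V - {u} - {v})) - 2 * theta (V - {u} - {v}) (del_vert_rel (del_vert_rel E u) v) \<le> int (rk f (V - {u} - {v}) (V - {u} - {v}))"
      "int (rk f (V - {u} - {v}) (V - {u} - {v})) - 2 * theta (V - {u} - {v}) (del_vert_rel (del_vert_rel E u) v) \<le> int (rk g (V - {u} - {v}) (V - {u} - {v}))"
      using rank_bound[OF sguv supp_del[OF supp_del[OF sf]] supp_del[OF supp_del[OF sgg]]]
        rank_bound[OF sguv supp_del[OF supp_del[OF sgg]] supp_del[OF supp_del[OF sf]]]
      by auto
    ultimately show False using eqs t1 t2 unfolding P_def G_def th_def by linarith
  qed
  have eqs: "gain_rank V E \<phi> = nat P" "graph_rank V E = nat G"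
    "gain_rank (del_vert_set V v) (del_vert_rel E v) \<phi> = nat P'"
    "graph_rank (del_vert_set V v) (del_vert_rel E v) = nat G'"
    "theta V E = th" "theta (del_vert_set V v) (del_vert_rel E v) = th'"
    unfolding P_def G_def P'_def G'_def th_def th'_def del_vert_set_def using gr0 gr1 by auto
  have nn: "P \<ge> 0" "G \<ge> 0" "P' \<ge> 0" "G' \<ge> 0" unfolding P_def G_def P'_def G'_def by auto
  show ?thesis unfolding eqs using a1 b1 c1 one nqp nn by auto
qed

end
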